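(* Consider the CTMDP primitives $\{S,A,q,c\}$ described in the context, assume $\bar c(x):=\sup_{a\in A}c(x,a)<\infty$ for all $x\in S$, and let $w$ be a $[1,\infty)$-valued Borel function on $S$ with $w(x)\ge1+\bar c(x)+\bar q_x$ for all $x\in S$. Define the stochastic kernel $\tilde p(dy|x,a):=\frac{q(dy|x,a)}{w(x)}+\delta_{\{x\}}(dy)$ on $\mathcal B(S)$ given $(x,a)\in S\times A$. Then: (a) A $[1,\infty]$-valued lower semianalytic function $V$ on $S$ satisfies $$0=\inf_{a\in A}\left\{c(x,a)V(x)+\int_S q(dy|x,a)V(y)\right\}\qquad(\ast)$$ for each $x\in S$ with $V(x)<\infty$ if and only if $$V(x)=\inf_{a\in A}\left\{\frac{w(x)}{w(x)-c(x,a)}\int_S\tilde p(dy|x,a)V(y)\right\},\quad\forall x\in S.$$ (b) Let $V$ be a $[1,\infty]$-valued lower semianalytic function on $S$ satisfying $(\ast)$ for each $x\in S$ with $V(x)<\infty$. A deterministic stationary policy (measurable map) $\varphi:S\to A$ satisfies $$0=\inf_{a\in A}\left\{c(x,a)V(x)+\int_S q(dy|x,a)V(y)\right\}=c(x,\varphi(x))V(x)+\int_S q(dy|x,\varphi(x))V(y)$$ for each $x\in S$ with $V(x)<\infty$ if and only if $$\inf_{a\in A}\left\{\frac{w(x)}{w(x)-c(x,a)}\int_S\tilde p(dy|x,a)V(y)\right\}=\frac{w(x)}{w(x)-c(x,\varphi(x))}\int_S\tilde p(dy|x,\varphi(x))V(y),\quad\forall x\in S.$$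
   Context: $S$, $A$ are nonempty Borel spaces. The transition rate $q(dy|x,a)$ is a signed kernel on $\mathcal B(S)$ given $(x,a)\in S\times A$ with $q(\Gamma\setminus\{x\}|x,a)\ge0$ for all $\Gamma\in\mathcal B(S)$, $q(S|x,a)=0$, and $\bar q_x:=\sup_{a\in A}q_x(a)<\infty$, where $q_x(a):=-q(\{x\}|x,a)$. The cost rate $c:S\times A\to[0,\infty)$ is measurable. Conventions: $0/0=0$, $0\cdot\infty=0$, $1/0=+\infty$, $\infty-\infty=\infty$. *)

theory Defs
  imports "HOL-Analysis.Analysis"
begin

definition analytic_set :: "'a::topological_space set \<Rightarrow> bool" where
  "analytic_set B \<longleftrightarrow> B = {} \<or> (\<exists>f :: (nat \<Rightarrow> nat) \<Rightarrow> 'a. continuous_on UNIV f \<and> range f = B)"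

definition lower_semianalytic :: "('a::topological_space \<Rightarrow> ennreal) \<Rightarrow> bool" where
  "lower_semianalytic V \<longleftrightarrow> (\<forall>r::real. analytic_set {x. V x < ennreal r})"

definition signed_rate_kernel ::
  "('a::polish_space \<Rightarrow> 'b::polish_space \<Rightarrow> 'a set \<Rightarrow> real) \<Rightarrow> bool" where
  "signed_rate_kernel q \<longleftrightarrow>
     (\<forall>x a. \<forall>F::nat \<Rightarrow> 'a set. range F \<subseteq> sets borel \<longrightarrow> disjoint_family F \<longrightarrow>
          (\<lambda>n. q x a (F n)) sums q x a (\<Union>(range F))) \<and>
     (\<forall>\<Gamma>\<in>sets borel. (\<lambda>(x,a). q x a \<Gamma>) \<in> borel_measurable (borel \<Otimes>\<^sub>M borel)) \<and>
     (\<forall>x a. \<forall>\<Gamma>\<in>sets borel. q x a (\<Gamma> - {x}) \<ge> 0) \<and>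
     (\<forall>x a. q x a UNIV = 0)"

definition qx :: "('a \<Rightarrow> 'b \<Rightarrow> 'a set \<Rightarrow> real) \<Rightarrow> 'a \<Rightarrow> 'b \<Rightarrow> real" where
  "qx q x a = - q x a {x}"

definition qplus :: "('a::polish_space \<Rightarrow> 'b \<Rightarrow> 'a set \<Rightarrow> real) \<Rightarrow> 'a \<Rightarrow> 'b \<Rightarrow> 'a measure" where
  "qplus q x a = measure_of UNIV (sets borel) (\<lambda>\<Gamma>. ennreal (q x a (\<Gamma> - {x})))"

text \<open>\<integral>_S q(dy|x,a) V(y) for a [0,\<infinity>]-valued V, via the Jordan decomposition
  q = q^+ - q_x(a) \<delta>_x, integrals w.r.t. the completion (universally measurable V),
  with the conventions 0\<cdot>\<infinity> = 0 and \<infinity> - \<infinity> = \<infinity>.\<close>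
definition qint :: "('a::polish_space \<Rightarrow> 'b \<Rightarrow> 'a set \<Rightarrow> real) \<Rightarrow> 'a \<Rightarrow> 'b \<Rightarrow> ('a \<Rightarrow> ennreal) \<Rightarrow> ereal" where
  "qint q x a V =
     (let I = (\<integral>\<^sup>+ y. V y \<partial>completion (qplus q x a));
          D = ennreal (qx q x a) * V x
      in if I = \<infinity> then \<infinity> else enn2ereal I - enn2ereal D)"

definition ptilde :: "('a::polish_space \<Rightarrow> 'b \<Rightarrow> 'a set \<Rightarrow> real) \<Rightarrow> ('a \<Rightarrow> real) \<Rightarrow> 'a \<Rightarrow> 'b \<Rightarrow> 'a measure" where
  "ptilde q w x a = measure_of UNIV (sets borel) (\<lambda>\<Gamma>. ennreal (q x a \<Gamma> / w x + indicator \<Gamma> x))"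

definition hjb_term :: "('a::polish_space \<Rightarrow> 'b \<Rightarrow> 'a set \<Rightarrow> real) \<Rightarrow> ('a \<Rightarrow> 'b \<Rightarrow> real) \<Rightarrow> ('a \<Rightarrow> ennreal) \<Rightarrow> 'a \<Rightarrow> 'b \<Rightarrow> ereal" where
  "hjb_term q c V x a = ereal (c x a) * enn2ereal (V x) + qint q x a V"

definition tilde_term :: "('a::polish_space \<Rightarrow> 'b \<Rightarrow> 'a set \<Rightarrow> real) \<Rightarrow> ('a \<Rightarrow> 'b \<Rightarrow> real) \<Rightarrow> ('a \<Rightarrow> real) \<Rightarrow> ('a \<Rightarrow> ennreal) \<Rightarrow> 'a \<Rightarrow> 'b \<Rightarrow> ennreal" where
  "tilde_term q c w V x a = ennreal (w x / (w x - c x a)) * (\<integral>\<^sup>+ y. V y \<partial>completion (ptilde q w x a))"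

end

theory Submission
  imports Defs
begin

lemma q_sums:
  assumes q: "signed_rate_kernel q" and "range F \<subseteq> sets borel" and "disjoint_family F"
  shows "(\<lambda>n. q x a (F n)) sums q x a (\<Union>(range F))"
  using assms unfolding signed_rate_kernel_def by blast

lemma q_empty:
  assumes q: "signed_rate_kernel q" shows "q x a {} = 0"
proof -
  have "(\<lambda>n. q x a ((\<lambda>_::nat. {}) n)) sums q x a (\<Union>(range (\<lambda>_::nat. {})))"
    by (rule q_sums[OF q]) (auto simp: disjoint_family_on_def)
  hence "(\<lambda>n. q x a {}) sums q x a {}" by simp
  hence "summable (\<lambda>n::nat. q x a {})" by (rule sums_summable)
  thus ?thesis using summable_const_iff by blast
qed

lemma q_add:
  assumes q: "signed_rate_kernel q" and A: "A \<in> sets borel" and B: "B \<in> sets borel"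
    and d: "A \<inter> B = {}"
  shows "q x a (A \<union> B) = q x a A + q x a B"
proof -
  define F where "F = (\<lambda>n::nat. if n = 0 then A else if n = 1 then B else {})"
  have r: "range F \<subseteq> sets borel" using A B by (auto simp: F_def)
  have df: "disjoint_family F" using d unfolding disjoint_family_on_def F_def by auto
  have U: "\<Union>(range F) = A \<union> B"
    unfolding F_def by (auto split: if_splits)
  have s1: "(\<lambda>n. q x a (F n)) sums q x a (A \<union> B)"
    by (rule q_sums[OF q r df, unfolded U])
  have s2: "(\<lambda>n. q x a (F n)) sums (\<Sum>n\<in>{0,1}. q x a (F n))"
    by (rule sums_finite) (auto simp: F_def q_empty[OF q])
  from sums_unique2[OF s1 s2] show ?thesis by (simp add: F_def)
qed

lemma q_nonneg_off:
  assumes q: "signed_rate_kernel q" and A: "A \<in> sets borel" and "x \<notin> A"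
  shows "q x a A \<ge> 0"
proof -
  have "q x a (A - {x}) \<ge> 0" using q A unfolding signed_rate_kernel_def by blast
  thus ?thesis using assms(3) by (metis Diff_empty Diff_insert0)
qed

lemma qx_nonneg:
  assumes q: "signed_rate_kernel q" shows "qx q x a \<ge> 0"
proof -
  have "q x a UNIV = q x a (UNIV - {x}) + q x a {x}"
    using q_add[OF q, of "UNIV - {x}" "{x}"] by simp
  moreover have "q x a UNIV = 0" using q unfolding signed_rate_kernel_def by blast
  moreover have "q x a (UNIV - {x}) \<ge> 0" using q_nonneg_off[OF q, of "UNIV - {x}" x] by simp
  ultimately show ?thesis unfolding qx_def by linarith
qed

lemma q_split_x:
  assumes q: "signed_rate_kernel q" and A: "A \<in> sets borel" and "x \<in> A"
  shows "q x a A = q x a (A - {x}) - qx q x a"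
  using q_add[OF q, of "A - {x}" "{x}" x a] A assms(3) unfolding qx_def
  by (simp add: insert_absorb)

lemma sa_borel: "sigma_algebra UNIV (sets (borel::'a::topological_space measure))"
  using sets.sigma_algebra_axioms[of borel] by simp

lemma emeasure_mo_borel:
  assumes "positive (sets borel) \<mu>" "countably_additive (sets borel) \<mu>" "A \<in> sets borel"
  shows "emeasure (measure_of UNIV (sets (borel::'a::topological_space measure)) \<mu>) A = \<mu> A"
  by (rule emeasure_measure_of_sigma[OF sa_borel assms])

lemma sets_mo_borel[simp]:
  "sets (measure_of UNIV (sets (borel::'a::topological_space measure)) \<mu>) = sets borel"
  by (rule sigma_algebra.sets_measure_of_eq[OF sa_borel])

lemma space_mo_borel[simp]:
  "space (measure_of UNIV (sets (borel::'a::topological_space measure)) \<mu>) = UNIV"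
  by (simp add: space_measure_of_conv)

lemma emeasure_qplus:
  fixes q :: "'a::polish_space \<Rightarrow> 'b::polish_space \<Rightarrow> 'a set \<Rightarrow> real"
  assumes q: "signed_rate_kernel q" and A: "A \<in> sets borel"
  shows "emeasure (qplus q x a) A = ennreal (q x a (A - {x}))"
  unfolding qplus_def
proof (rule emeasure_mo_borel[OF _ _ A])
  show "positive (sets borel) (\<lambda>\<Gamma>. ennreal (q x a (\<Gamma> - {x})))"
    by (simp add: positive_def q_empty[OF q])
  show "countably_additive (sets borel) (\<lambda>\<Gamma>. ennreal (q x a (\<Gamma> - {x})))"
    unfolding countably_additive_def
  proof (intro allI impI)
    fix F :: "nat \<Rightarrow> 'a set" assume r: "range F \<subseteq> sets borel" and d: "disjoint_family F"
    have r': "range (\<lambda>i. F i - {x}) \<subseteq> sets borel" using r by auto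
    have d': "disjoint_family (\<lambda>i. F i - {x})" using d unfolding disjoint_family_on_def by auto
    have s: "(\<lambda>i. q x a (F i - {x})) sums q x a (\<Union>(range F) - {x})"
    proof -
      have "(\<Union>i. F i - {x}) = \<Union>(range F) - {x}" by auto
      thus ?thesis using q_sums[OF q r' d', of x a] by simp
    qed
    have nn: "\<And>i. q x a (F i - {x}) \<ge> 0" using q r unfolding signed_rate_kernel_def by auto
    show "(\<Sum>i. ennreal (q x a (F i - {x}))) = ennreal (q x a (\<Union>(range F) - {x}))"
      using suminf_ennreal2[OF nn sums_summable[OF s]] sums_unique[OF s] by simp
  qed
qed

lemma sets_qplus[simp]: "sets (qplus q x a) = sets borel" by (simp add: qplus_def)
lemma space_qplus[simp]: "space (qplus q x a) = UNIV" by (simp add: qplus_def)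
lemma sets_ptilde[simp]: "sets (ptilde q w x a) = sets borel" by (simp add: ptilde_def)
lemma space_ptilde[simp]: "space (ptilde q w x a) = UNIV" by (simp add: ptilde_def)

lemma ptilde_nonneg:
  assumes q: "signed_rate_kernel q" and A: "A \<in> sets borel" and W: "qx q x a \<le> w x" "w x > 0"
  shows "q x a A / w x + indicator A x \<ge> 0"
proof (cases "x \<in> A")
  case True
  have "q x a (A - {x}) \<ge> 0" using q A unfolding signed_rate_kernel_def by blast
  hence "q x a A \<ge> - w x" using q_split_x[OF q A True, of a] W by linarith
  hence "q x a A / w x \<ge> -1" using W by (simp add: field_simps)
  thus ?thesis using True by simp
next
  case False thus ?thesis using q_nonneg_off[OF q A False, of a] W by simp
qed

lemma emeasure_ptilde:
  fixes q :: "'a::polish_space \<Rightarrow> 'b::polish_space \<Rightarrow> 'a set \<Rightarrow> real"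
  assumes q: "signed_rate_kernel q" and A: "A \<in> sets borel" and W: "qx q x a \<le> w x" "w x > 0"
  shows "emeasure (ptilde q w x a) A = ennreal (q x a A / w x + indicator A x)"
  unfolding ptilde_def
proof (rule emeasure_mo_borel[OF _ _ A])
  show "positive (sets borel) (\<lambda>\<Gamma>. ennreal (q x a \<Gamma> / w x + indicator \<Gamma> x))"
    by (simp add: positive_def q_empty[OF q])
  show "countably_additive (sets borel) (\<lambda>\<Gamma>. ennreal (q x a \<Gamma> / w x + indicator \<Gamma> x))"
    unfolding countably_additive_def
  proof (intro allI impI)
    fix F :: "nat \<Rightarrow> 'a set" assume r: "range F \<subseteq> sets borel" and d: "disjoint_family F"
      and U: "\<Union>(range F) \<in> sets borel"
    have s1: "(\<lambda>i. q x a (F i) / w x) sums (q x a (\<Union>(range F)) / w x)"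
      using q_sums[OF q r d, of x a] by (rule sums_divide)
    have s2: "(\<lambda>i. indicator (F i) x :: real) sums indicator (\<Union>(range F)) x"
    proof (cases "\<exists>j. x \<in> F j")
      case True
      then obtain j where j: "x \<in> F j" by blast
      have "(\<lambda>i. indicator (F i) x :: real) sums (\<Sum>i\<in>{j}. indicator (F i) x)"
        by (rule sums_finite) (use d j in \<open>auto simp: disjoint_family_on_def indicator_def\<close>)
      moreover have "indicator (\<Union>(range F)) x = (1::real)" using j by (auto simp: indicator_def)
      ultimately show ?thesis using j by simp
    next
      case False thus ?thesis by (simp add: indicator_def)
    qed
    have s: "(\<lambda>i. q x a (F i) / w x + indicator (F i) x) sums (q x a (\<Union>(range F)) / w x + indicator (\<Union>(range F)) x)"
      by (rule sums_add[OF s1 s2])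
    have nn: "\<And>i. q x a (F i) / w x + indicator (F i) x \<ge> 0"
      using ptilde_nonneg[where q=q and w=w and x=x and a=a, OF q _ W(1) W(2)] r by auto
    show "(\<Sum>i. ennreal (q x a (F i) / w x + indicator (F i) x)) = ennreal (q x a (\<Union>(range F)) / w x + indicator (\<Union>(range F)) x)"
      using suminf_ennreal2[OF nn sums_summable[OF s]] sums_unique[OF s] by simp
  qed
qed

lemma simple_le_nn: "simple_function M g \<Longrightarrow> g \<le> f \<Longrightarrow> integral\<^sup>S M g \<le> integral\<^sup>N M f"
  unfolding nn_integral_def by (auto intro!: SUP_upper)

lemma nn_split:
  assumes A: "A \<in> sets M"
  shows "integral\<^sup>N M f = (\<integral>\<^sup>+y. f y * indicator A y \<partial>M) + (\<integral>\<^sup>+y. f y * indicator (space M - A) y \<partial>M)"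
proof (rule antisym)
  have A': "space M - A \<in> sets M" using A by auto
  show "integral\<^sup>N M f \<le> (\<integral>\<^sup>+y. f y * indicator A y \<partial>M) + (\<integral>\<^sup>+y. f y * indicator (space M - A) y \<partial>M)"
    unfolding nn_integral_def[of M f]
  proof (rule SUP_least, safe)
    fix g assume g: "simple_function M g" "g \<le> f"
    have sg1: "simple_function M (\<lambda>y. g y * indicator A y)"
      using g(1) A by (intro simple_function_mult) auto
    have sg2: "simple_function M (\<lambda>y. g y * indicator (space M - A) y)"
      using g(1) A' by (intro simple_function_mult) auto
    have "integral\<^sup>S M g = integral\<^sup>S M (\<lambda>y. g y * indicator A y + g y * indicator (space M - A) y)"
      by (rule simple_integral_cong) (use A sets.sets_into_space in \<open>auto split: split_indicator\<close>)
    also have "\<dots> = integral\<^sup>S M (\<lambda>y. g y * indicator A y) + integral\<^sup>S M (\<lambda>y. g y * indicator (space M - A) y)"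
      by (rule simple_integral_add[OF sg1 _ sg2]) auto
    also have "\<dots> \<le> (\<integral>\<^sup>+y. f y * indicator A y \<partial>M) + (\<integral>\<^sup>+y. f y * indicator (space M - A) y \<partial>M)"
      by (intro add_mono simple_le_nn[OF sg1] simple_le_nn[OF sg2])
         (use g(2) in \<open>auto simp: le_fun_def intro!: mult_right_mono\<close>)
    finally show "integral\<^sup>S M g \<le> (\<integral>\<^sup>+y. f y * indicator A y \<partial>M) + (\<integral>\<^sup>+y. f y * indicator (space M - A) y \<partial>M)" .
  qed
  show "(\<integral>\<^sup>+y. f y * indicator A y \<partial>M) + (\<integral>\<^sup>+y. f y * indicator (space M - A) y \<partial>M) \<le> integral\<^sup>N M f"
  proof -
    have key: "integral\<^sup>S M g1 + integral\<^sup>S M g2 \<le> integral\<^sup>N M f"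
      if g1: "simple_function M g1" "g1 \<le> (\<lambda>y. f y * indicator A y)"
        and g2: "simple_function M g2" "g2 \<le> (\<lambda>y. f y * indicator (space M - A) y)" for g1 g2
    proof -
      have "integral\<^sup>S M g1 + integral\<^sup>S M g2 = integral\<^sup>S M (\<lambda>y. g1 y + g2 y)"
        by (rule simple_integral_add[OF g1(1) _ g2(1), symmetric]) auto
      also have "\<dots> \<le> integral\<^sup>N M f"
      proof (rule simple_le_nn)
        show "simple_function M (\<lambda>y. g1 y + g2 y)" using g1(1) g2(1) by (rule simple_function_add)
        show "(\<lambda>y. g1 y + g2 y) \<le> f"
        proof (rule le_funI)
          fix y
          have a: "g1 y \<le> f y * indicator A y" and b: "g2 y \<le> f y * indicator (space M - A) y"
            using g1(2) g2(2) by (auto simp: le_fun_def)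
          show "g1 y + g2 y \<le> f y"
          proof (cases "y \<in> A")
            case True thus ?thesis using a b by (simp add: indicator_def)
          next
            case False
            have "f y * indicator (space M - A) y \<le> f y" by (cases "y \<in> space M") (auto simp: indicator_def)
            thus ?thesis using a b False by (auto simp: indicator_def)
          qed
        qed
      qed
      finally show ?thesis .
    qed
    let ?G1 = "{g. simple_function M g \<and> g \<le> (\<lambda>y. f y * indicator A y)}"
    let ?G2 = "{g. simple_function M g \<and> g \<le> (\<lambda>y. f y * indicator (space M - A) y)}"
    have ne1: "?G1 \<noteq> {}"
    proof -
      have "(\<lambda>_. 0) \<in> ?G1" by (auto simp: le_fun_def)
      thus ?thesis by blast
    qed
    have ne2: "?G2 \<noteq> {}"
    proof -
      have "(\<lambda>_. 0) \<in> ?G2" by (auto simp: le_fun_def)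
      thus ?thesis by blast
    qed
    have "(SUP g1\<in>?G1. integral\<^sup>S M g1) + (SUP g2\<in>?G2. integral\<^sup>S M g2) \<le> integral\<^sup>N M f"
    proof -
      have "(SUP g1\<in>?G1. integral\<^sup>S M g1) + (SUP g2\<in>?G2. integral\<^sup>S M g2)
          = (SUP g1\<in>?G1. integral\<^sup>S M g1 + (SUP g2\<in>?G2. integral\<^sup>S M g2))"
        by (rule ennreal_SUP_add_left[OF ne1, symmetric])
      also have "\<dots> \<le> integral\<^sup>N M f"
      proof (rule SUP_least)
        fix g1 assume "g1 \<in> ?G1"
        have "integral\<^sup>S M g1 + (SUP g2\<in>?G2. integral\<^sup>S M g2) = (SUP g2\<in>?G2. integral\<^sup>S M g1 + integral\<^sup>S M g2)"
          by (rule ennreal_SUP_add_right[OF ne2])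
        also have "\<dots> \<le> integral\<^sup>N M f"
          by (rule SUP_least) (use key \<open>g1 \<in> ?G1\<close> in auto)
        finally show "integral\<^sup>S M g1 + (SUP g2\<in>?G2. integral\<^sup>S M g2) \<le> integral\<^sup>N M f" .
      qed
      finally show ?thesis .
    qed
    thus ?thesis unfolding nn_integral_def[of M "\<lambda>y. f y * indicator A y"]
        nn_integral_def[of M "\<lambda>y. f y * indicator (space M - A) y"] .
  qed
qed

lemma nn_scale:
  assumes sN: "sets N = sets M" and spN: "space N = space M" and c: "c \<ge> 0"
    and e: "\<And>B. B \<in> sets M \<Longrightarrow> B \<inter> A = {} \<Longrightarrow> emeasure N B = ennreal c * emeasure M B"
  shows "(\<integral>\<^sup>+y. f y * indicator (space M - A) y \<partial>N) = ennreal c * (\<integral>\<^sup>+y. f y * indicator (space M - A) y \<partial>M)"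
proof -
  let ?h = "\<lambda>y. f y * indicator (space M - A) y"
  have sf: "simple_function N g = simple_function M g" for g
    unfolding simple_function_def sN spN ..
  have si: "integral\<^sup>S N g = ennreal c * integral\<^sup>S M g" if "g \<le> ?h" "simple_function M g" for g
  proof -
    have "integral\<^sup>S N g = (\<Sum>v\<in>g ` space M. ennreal c * (v * emeasure M (g -` {v} \<inter> space M)))"
      unfolding simple_integral_def spN
    proof (rule sum.cong[OF refl])
      fix v assume "v \<in> g ` space M"
      show "v * emeasure N (g -` {v} \<inter> space M) = ennreal c * (v * emeasure M (g -` {v} \<inter> space M))"
      proof (cases "v = 0")
        case False
        have "g -` {v} \<inter> space M \<inter> A = {}"
        proof (rule ccontr)
          assume "g -` {v} \<inter> space M \<inter> A \<noteq> {}"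
          then obtain z where z: "g z = v" "z \<in> A" by auto
          have "g z \<le> f z * indicator (space M - A) z" using that(1) by (auto simp: le_fun_def)
          thus False using z False by (simp add: indicator_def)
        qed
        moreover have "g -` {v} \<inter> space M \<in> sets M"
          using that(2) \<open>v \<in> g ` space M\<close> unfolding simple_function_def by blast
        ultimately show ?thesis using e by (simp add: ac_simps)
      qed simp
    qed
    also have "\<dots> = ennreal c * integral\<^sup>S M g"
      unfolding simple_integral_def by (simp add: sum_distrib_left)
    finally show ?thesis .
  qed
  show ?thesis
    unfolding nn_integral_def sf SUP_mult_left_ennreal
    by (rule SUP_cong) (auto intro!: si)
qed


lemma ptilde_integral:
  fixes q :: "'a::polish_space \<Rightarrow> 'b::polish_space \<Rightarrow> 'a set \<Rightarrow> real"
  assumes q: "signed_rate_kernel q" and W: "qx q x a \<le> w x" "w x > 0"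
  shows "(\<integral>\<^sup>+y. V y \<partial>ptilde q w x a) = ennreal (1 / w x) * (\<integral>\<^sup>+y. V y \<partial>qplus q x a)
           + V x * ennreal (1 - qx q x a / w x)"
proof -
  have sx: "{x} \<in> sets borel" by simp
  have e1: "emeasure (ptilde q w x a) {x} = ennreal (1 - qx q x a / w x)"
    using emeasure_ptilde[where q=q and w=w and x=x and a=a, OF q sx W(1) W(2)] W by (simp add: qx_def add.commute)
  have e2: "emeasure (qplus q x a) {x} = 0"
    using emeasure_qplus[OF q sx] by (simp add: q_empty[OF q])
  have sc: "(\<integral>\<^sup>+y. V y * indicator (space (qplus q x a) - {x}) y \<partial>ptilde q w x a)
      = ennreal (1 / w x) * (\<integral>\<^sup>+y. V y * indicator (space (qplus q x a) - {x}) y \<partial>qplus q x a)"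
  proof (rule nn_scale)
    fix B assume B: "B \<in> sets (qplus q x a)" "B \<inter> {x} = {}"
    hence B': "B \<in> sets borel" "x \<notin> B" by auto
    have nn: "q x a B \<ge> 0" using q_nonneg_off[OF q B'] .
    have "emeasure (ptilde q w x a) B = ennreal (q x a B / w x)"
      using emeasure_ptilde[where q=q and w=w and x=x and a=a, OF q B'(1) W(1) W(2)] B'(2) by simp
    also have "\<dots> = ennreal (1 / w x) * ennreal (q x a B)"
      using nn W by (simp add: ennreal_mult[symmetric])
    also have "ennreal (q x a B) = emeasure (qplus q x a) B"
      using emeasure_qplus[OF q B'(1)] B'(2) by simp
    finally show "emeasure (ptilde q w x a) B = ennreal (1 / w x) * emeasure (qplus q x a) B" .
  qed (use W in auto)
  have "(\<integral>\<^sup>+y. V y \<partial>ptilde q w x a) = V x * ennreal (1 - qx q x a / w x)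
      + (\<integral>\<^sup>+y. V y * indicator (space (qplus q x a) - {x}) y \<partial>ptilde q w x a)"
    using nn_split[of "{x}" "ptilde q w x a" V] e1 by simp
  moreover have "(\<integral>\<^sup>+y. V y \<partial>qplus q x a) =
      (\<integral>\<^sup>+y. V y * indicator (space (qplus q x a) - {x}) y \<partial>qplus q x a)"
    using nn_split[of "{x}" "qplus q x a" V] e2 by simp
  ultimately show ?thesis using sc by (simp add: ac_simps)
qed

lemma tilde_expand:
  fixes q :: "'a::polish_space \<Rightarrow> 'b::polish_space \<Rightarrow> 'a set \<Rightarrow> real"
  assumes q: "signed_rate_kernel q" and W: "w x \<ge> 1 + c x a + qx q x a" and C: "c x a \<ge> 0"
  shows "tilde_term q c w V x a = ennreal (w x / (w x - c x a)) *
     (ennreal (1 / w x) * (\<integral>\<^sup>+y. V y \<partial>qplus q x a) + V x * ennreal (1 - qx q x a / w x))"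
proof -
  have Q: "qx q x a \<ge> 0" by (rule qx_nonneg[OF q])
  show ?thesis unfolding tilde_term_def nn_integral_completion
    by (subst ptilde_integral[OF q]) (use W C Q in auto)
qed

lemma tilde_top:
  fixes q :: "'a::polish_space \<Rightarrow> 'b::polish_space \<Rightarrow> 'a set \<Rightarrow> real"
  assumes q: "signed_rate_kernel q" and W: "w x \<ge> 1 + c x a + qx q x a" and C: "c x a \<ge> 0"
    and V: "V x = \<infinity>"
  shows "tilde_term q c w V x a = \<infinity>"
proof -
  have Q: "qx q x a \<ge> 0" by (rule qx_nonneg[OF q])
  have p1: "1 - qx q x a / w x > 0" using W C Q by (simp add: field_simps)
  have p2: "w x / (w x - c x a) > 0" using W C Q by (simp add: field_simps)
  have "V x * ennreal (1 - qx q x a / w x) = \<infinity>" using V p1 W C Q by (simp add: ennreal_mult_eq_top_iff)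
  thus ?thesis unfolding tilde_expand[where q=q and c=c and w=w and x=x and a=a and V=V, OF q W C] using p2 W C Q by (simp add: ennreal_mult_eq_top_iff)
qed

lemma tilde_fin:
  fixes q :: "'a::polish_space \<Rightarrow> 'b::polish_space \<Rightarrow> 'a set \<Rightarrow> real"
  assumes q: "signed_rate_kernel q" and W: "w x \<ge> 1 + c x a + qx q x a" and C: "c x a \<ge> 0"
    and V: "V x = ennreal v" "v \<ge> 0"
  shows "enn2ereal (tilde_term q c w V x a) = ereal v + hjb_term q c V x a / ereal (w x - c x a)"
proof -
  have Q: "qx q x a \<ge> 0" by (rule qx_nonneg[OF q])
  have p1: "1 - qx q x a / w x > 0" using W C Q by (simp add: field_simps)
  have p2: "w x / (w x - c x a) > 0" using W C Q by (simp add: field_simps)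
  have p3: "w x - c x a > 0" "w x > 0" using W C Q by auto
  define I where "I = (\<integral>\<^sup>+y. V y \<partial>qplus q x a)"
  have qi: "qint q x a V = (if I = \<infinity> then \<infinity> else enn2ereal I - enn2ereal (ennreal (qx q x a) * V x))"
    unfolding qint_def I_def nn_integral_completion Let_def by simp
  have te: "tilde_term q c w V x a = ennreal (w x / (w x - c x a)) *
     (ennreal (1 / w x) * I + V x * ennreal (1 - qx q x a / w x))"
    unfolding I_def by (rule tilde_expand[where q=q and c=c and w=w and x=x and a=a and V=V, OF q W C])
  show ?thesis
  proof (cases "I = \<infinity>")
    case True
    have "tilde_term q c w V x a = \<infinity>" unfolding te True using p2 p3
      by (simp add: ennreal_mult_eq_top_iff)
    moreover have "hjb_term q c V x a = \<infinity>" unfolding hjb_term_def qi using True V by simp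
    ultimately show ?thesis using p3 by simp
  next
    case False
    then obtain i where i: "I = ennreal i" "i \<ge> 0" by (cases I) auto
    have "tilde_term q c w V x a = ennreal (w x / (w x - c x a) * (1 / w x * i + v * (1 - qx q x a / w x)))"
      unfolding te i V using p1 p2 p3 i(2) V(2)
      by (simp add: ennreal_mult[symmetric] ennreal_plus[symmetric] del: ennreal_plus)
    hence "enn2ereal (tilde_term q c w V x a) = ereal (w x / (w x - c x a) * (1 / w x * i + v * (1 - qx q x a / w x)))"
      using p1 p2 p3 i(2) V(2) by simp
    moreover have "hjb_term q c V x a = ereal (c x a * v + i - qx q x a * v)"
      unfolding hjb_term_def qi using False i V Q by (simp add: ennreal_mult[symmetric])
    moreover have "w x / (w x - c x a) * (1 / w x * i + v * (1 - qx q x a / w x))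
        = v + (c x a * v + i - qx q x a * v) / (w x - c x a)"
      using p3 by (simp add: field_simps)
    moreover have "ereal (c x a * v + i - qx q x a * v) / ereal (w x - c x a)
        = ereal ((c x a * v + i - qx q x a * v) / (w x - c x a))"
      using p3 by simp
    ultimately show ?thesis by (simp del: ereal_divide)
  qed
qed

lemma ediv_facts:
  fixes h :: ereal and d W :: real
  assumes d: "1 \<le> d" "d \<le> W"
  shows "0 \<le> h / ereal d \<longleftrightarrow> 0 \<le> h"
    and "h / ereal d = 0 \<longleftrightarrow> h = 0"
    and "0 \<le> h \<Longrightarrow> h / ereal d \<le> h"
    and "ereal e \<le> h \<Longrightarrow> 0 \<le> e \<Longrightarrow> ereal (e / W) \<le> h / ereal d"
proof -
  have d0: "d > 0" "d \<noteq> 0" using d by auto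
  show "0 \<le> h / ereal d \<longleftrightarrow> 0 \<le> h"
    using d0 by (cases h) (auto simp: zero_le_divide_iff)
  show "h / ereal d = 0 \<longleftrightarrow> h = 0"
    using d0 by (cases h) auto
  show "0 \<le> h \<Longrightarrow> h / ereal d \<le> h"
  proof (cases h)
    case (real r)
    assume "0 \<le> h"
    hence "r \<ge> 0" using real by simp
    hence "r / d \<le> r" using d by (simp add: divide_le_eq mult_le_cancel_left1 order_trans[of r "r*1"])
    thus ?thesis using real d0 by simp
  qed (use d0 in auto)
  show "ereal e \<le> h \<Longrightarrow> 0 \<le> e \<Longrightarrow> ereal (e / W) \<le> h / ereal d"
  proof (cases h)
    case (real r)
    assume "ereal e \<le> h" "0 \<le> e"
    hence "e \<le> r" using real by simp
    have "e / W \<le> e / d" using d \<open>0 \<le> e\<close> by (intro divide_left_mono) auto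
    also have "\<dots> \<le> r / d" using \<open>e \<le> r\<close> d0 by (simp add: divide_right_mono)
    finally show ?thesis using real d0 by simp
  qed (use d0 in auto)
qed

lemma eadd_cancel: "ereal v + g \<le> ereal v + g' \<longleftrightarrow> g \<le> g'"
  by (cases g; cases g') auto

lemma enn_le_iff: "v \<ge> 0 \<Longrightarrow> ennreal v \<le> t \<longleftrightarrow> ereal v \<le> enn2ereal t"
  by (metis enn2ereal_ennreal less_eq_ennreal.rep_eq)

lemma abs_a:
  fixes h :: "'b \<Rightarrow> ereal" and d :: "'b \<Rightarrow> real" and t :: "'b \<Rightarrow> ennreal"
  assumes d: "\<And>a. 1 \<le> d a" "\<And>a. d a \<le> W" and v: "v \<ge> 0"
    and t: "\<And>a. enn2ereal (t a) = ereal v + h a / ereal (d a)"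
  shows "(INF a. h a) = 0 \<longleftrightarrow> ennreal v = (INF a. t a)"
proof -
  have P: "ennreal v \<le> t a \<longleftrightarrow> 0 \<le> h a" for a
    using enn_le_iff[OF v, of "t a"] t[of a] eadd_cancel[of v 0 "h a / ereal (d a)"]
      ediv_facts(1)[OF d(1)[of a] d(2)[of a]] by simp
  show ?thesis
  proof
    assume H: "(INF a. h a) = 0"
    have lo: "ennreal v \<le> (INF a. t a)"
    proof (rule INF_greatest)
      fix a
      have "0 \<le> h a" using H INF_lower[of a UNIV h] by simp
      thus "ennreal v \<le> t a" using P by simp
    qed
    show "ennreal v = (INF a. t a)"
    proof (rule ccontr)
      assume "ennreal v \<noteq> (INF a. t a)"
      hence "ennreal v < (INF a. t a)" using lo by simp
      then obtain z where z: "ennreal v < z" "z < (INF a. t a)" using dense by blast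
      then obtain \<zeta> where \<zeta>: "z = ennreal \<zeta>" "\<zeta> \<ge> 0" by (cases z rule: ennreal_cases) (auto simp: top_unique)
      have "\<zeta> > v" using z(1) \<zeta> v by (simp add: ennreal_less_iff)
      have "ereal (\<zeta> - v) \<le> h a" for a
      proof -
        have "z \<le> t a" by (rule order_trans[OF less_imp_le[OF z(2)] INF_lower]) simp
        hence "ennreal \<zeta> \<le> t a" using \<zeta> by simp
        hence "ereal \<zeta> \<le> ereal v + h a / ereal (d a)" using enn_le_iff[OF \<zeta>(2)] t by simp
        hence "ereal v + ereal (\<zeta> - v) \<le> ereal v + h a / ereal (d a)" by simp
        hence 1: "ereal (\<zeta> - v) \<le> h a / ereal (d a)" using eadd_cancel by blast
        have "0 \<le> ereal (\<zeta> - v)" using \<open>\<zeta> > v\<close> by simp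
        hence "0 \<le> h a / ereal (d a)" using 1 by (rule order_trans)
        hence "0 \<le> h a" using ediv_facts(1)[OF d(1)[of a] d(2)[of a]] by simp
        hence "h a / ereal (d a) \<le> h a" by (rule ediv_facts(3)[OF d(1)[of a] d(2)[of a]])
        with 1 show ?thesis by (rule order_trans)
      qed
      hence "ereal (\<zeta> - v) \<le> (INF a. h a)" by (rule INF_greatest)
      thus False using H \<open>\<zeta> > v\<close> by simp
    qed
  next
    assume T: "ennreal v = (INF a. t a)"
    have ge: "0 \<le> h a" for a
    proof -
      have "ennreal v \<le> t a" unfolding T by (rule INF_lower) simp
      thus ?thesis using P by simp
    qed
    have lo: "0 \<le> (INF a. h a)" using ge by (rule INF_greatest)
    show "(INF a. h a) = 0"
    proof (rule ccontr)
      assume "(INF a. h a) \<noteq> 0"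
      hence "0 < (INF a. h a)" using lo by simp
      then obtain z where z: "0 < z" "z < (INF a. h a)" using dense by blast
      have "z \<noteq> \<infinity>" using z(2) by auto
      then obtain e where e: "z = ereal e" "e > 0" using z(1) by (cases z) auto
      have W: "W \<ge> 1" using d(1)[of undefined] d(2)[of undefined] by linarith
      have "ennreal (v + e / W) \<le> t a" for a
      proof -
        have "z \<le> h a" by (rule order_trans[OF less_imp_le[OF z(2)] INF_lower]) simp
        hence "ereal e \<le> h a" using e by simp
        hence "ereal (e / W) \<le> h a / ereal (d a)"
          using ediv_facts(4)[OF d(1)[of a] d(2)[of a]] e by simp
        hence "ereal v + ereal (e / W) \<le> ereal v + h a / ereal (d a)" using eadd_cancel by blast
        hence "ereal (v + e / W) \<le> enn2ereal (t a)" using t by simp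
        thus ?thesis using enn_le_iff[of "v + e / W"] v e W by simp
      qed
      hence "ennreal (v + e / W) \<le> ennreal v" unfolding T by (rule INF_greatest)
      moreover have "e / W > 0" using e W by simp
      ultimately have "v + e / W \<le> v" using v by (subst (asm) ennreal_le_iff) auto
      thus False using e W by (simp add: field_simps)
    qed
  qed
qed

lemma abs_b:
  fixes h :: "'b \<Rightarrow> ereal" and d :: "'b \<Rightarrow> real" and t :: "'b \<Rightarrow> ennreal"
  assumes d: "\<And>a. 1 \<le> d a" "\<And>a. d a \<le> W" and v: "v \<ge> 0"
    and t: "\<And>a. enn2ereal (t a) = ereal v + h a / ereal (d a)"
    and H: "(INF a. h a) = 0"
  shows "(INF a. h a) = h b \<longleftrightarrow> (INF a. t a) = t b"
proof -
  have T: "(INF a. t a) = ennreal v" using abs_a[where h=h and d=d and t=t and W=W and v=v, OF d(1) d(2) v t] H by simp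
  have "t b = ennreal v \<longleftrightarrow> enn2ereal (t b) = ereal v"
    using v by (metis enn2ereal_ennreal antisym order_refl less_eq_ennreal.rep_eq)
  also have "\<dots> \<longleftrightarrow> h b / ereal (d b) = 0"
    using t[of b] eadd_cancel[of v "h b / ereal (d b)" 0] eadd_cancel[of v 0 "h b / ereal (d b)"]
    by (auto intro: antisym)
  also have "\<dots> \<longleftrightarrow> h b = 0" by (rule ediv_facts(2)[OF d(1)[of b] d(2)[of b]])
  finally show ?thesis using H T by auto
qed

theorem lemma5p8:
  fixes q :: "'a::polish_space \<Rightarrow> 'b::polish_space \<Rightarrow> 'a set \<Rightarrow> real"
    and c :: "'a \<Rightarrow> 'b \<Rightarrow> real"
    and w :: "'a \<Rightarrow> real"
  assumes q: "signed_rate_kernel q"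
    and qbar: "\<And>x. bdd_above (range (qx q x))"
    and c_meas: "(\<lambda>(x,a). c x a) \<in> borel_measurable (borel \<Otimes>\<^sub>M borel)"
    and c_nonneg: "\<And>x a. c x a \<ge> 0"
    and cbar: "\<And>x. bdd_above (range (c x))"
    and w_meas: "w \<in> borel_measurable borel"
    and w_ge: "\<And>x. w x \<ge> 1 + (SUP a. c x a) + (SUP a. qx q x a)"
  shows
    "(\<forall>V. lower_semianalytic V \<and> (\<forall>x. V x \<ge> 1) \<longrightarrow>
       ((\<forall>x. V x < \<infinity> \<longrightarrow> (INF a. hjb_term q c V x a) = 0) \<longleftrightarrow>
        (\<forall>x. V x = (INF a. tilde_term q c w V x a)))) \<and>
    (\<forall>V \<phi>. lower_semianalytic V \<and> (\<forall>x. V x \<ge> 1) \<and>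
        (\<forall>x. V x < \<infinity> \<longrightarrow> (INF a. hjb_term q c V x a) = 0) \<and>
        \<phi> \<in> borel_measurable borel \<longrightarrow>
       ((\<forall>x. V x < \<infinity> \<longrightarrow>
           (INF a. hjb_term q c V x a) = 0 \<and> (INF a. hjb_term q c V x a) = hjb_term q c V x (\<phi> x)) \<longleftrightarrow>
        (\<forall>x. (INF a. tilde_term q c w V x a) = tilde_term q c w V x (\<phi> x))))"
proof -
  have Wa: "w x \<ge> 1 + c x a + qx q x a" for x a
  proof -
    have "c x a \<le> (SUP a. c x a)" by (rule cSUP_upper[OF UNIV_I cbar])
    moreover have "qx q x a \<le> (SUP a. qx q x a)" by (rule cSUP_upper[OF UNIV_I qbar])
    ultimately show ?thesis using w_ge[of x] by linarith
  qed
  have dge: "1 \<le> w x - c x a" for x a using Wa[of x a] qx_nonneg[OF q, of x a] by linarith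
  have dle: "w x - c x a \<le> w x" for x a using c_nonneg[of x a] by linarith
  have Top: "tilde_term q c w V x a = \<infinity>" if "V x = \<infinity>" for V x a
    by (rule tilde_top[where q=q and c=c and w=w and V=V and x=x and a=a, OF q Wa c_nonneg that])
  have TopI: "(INF a. tilde_term q c w V x a) = \<infinity>" if "V x = \<infinity>" for V x
    using Top[of V x, OF that] by simp
  have tf: "enn2ereal (tilde_term q c w V x a) = ereal v + hjb_term q c V x a / ereal (w x - c x a)"
    if "V x = ennreal v" "v \<ge> 0" for V x v a
    by (rule tilde_fin[where q=q and c=c and w=w and V=V and x=x and a=a, OF q Wa c_nonneg that])
  have A: "(INF a. hjb_term q c V x a) = 0 \<longleftrightarrow> V x = (INF a. tilde_term q c w V x a)"
    if lt0: "V x < \<infinity>" for V x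
  proof -
    obtain v where v: "V x = ennreal v" "v \<ge> 0" using lt0 less_top_ennreal[of "V x"] by (auto simp: infinity_ennreal_def)
    show ?thesis unfolding v(1)
      by (rule abs_a[where d="\<lambda>a. w x - c x a" and W="w x", OF dge dle v(2) tf[of V x v, OF v]])
  qed
  have B: "(INF a. hjb_term q c V x a) = hjb_term q c V x b \<longleftrightarrow>
      (INF a. tilde_term q c w V x a) = tilde_term q c w V x b"
    if lt0: "V x < \<infinity>" and H0: "(INF a. hjb_term q c V x a) = 0" for V x b
  proof -
    obtain v where v: "V x = ennreal v" "v \<ge> 0" using lt0 less_top_ennreal[of "V x"] by (auto simp: infinity_ennreal_def)
    show ?thesis
      by (rule abs_b[where d="\<lambda>a. w x - c x a" and W="w x", OF dge dle v(2) tf[of V x v, OF v] H0])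
  qed
  have partA: "(\<forall>x. V x < \<infinity> \<longrightarrow> (INF a. hjb_term q c V x a) = 0) \<longleftrightarrow>
        (\<forall>x. V x = (INF a. tilde_term q c w V x a))" for V
  proof -
    have "(V x < \<infinity> \<longrightarrow> (INF a. hjb_term q c V x a) = 0) \<longleftrightarrow> V x = (INF a. tilde_term q c w V x a)" for x
    proof (cases "V x = \<infinity>")
      case True thus ?thesis using TopI[of V x, OF True] by simp
    next
      case False thus ?thesis using A[of V x] by (simp add: top.not_eq_extremum)
    qed
    thus ?thesis by blast
  qed
  have partB: "(\<forall>x. V x < \<infinity> \<longrightarrow>
           (INF a. hjb_term q c V x a) = 0 \<and> (INF a. hjb_term q c V x a) = hjb_term q c V x (\<phi> x)) \<longleftrightarrow>
        (\<forall>x. (INF a. tilde_term q c w V x a) = tilde_term q c w V x (\<phi> x))"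
    if H: "\<forall>x. V x < \<infinity> \<longrightarrow> (INF a. hjb_term q c V x a) = 0" for V \<phi>
  proof -
    have "(V x < \<infinity> \<longrightarrow>
           (INF a. hjb_term q c V x a) = 0 \<and> (INF a. hjb_term q c V x a) = hjb_term q c V x (\<phi> x)) \<longleftrightarrow>
        (INF a. tilde_term q c w V x a) = tilde_term q c w V x (\<phi> x)" for x
    proof (cases "V x = \<infinity>")
      case True thus ?thesis using TopI[of V x, OF True] Top[of V x, OF True] by simp
    next
      case False
      hence lt: "V x < \<infinity>" by (simp add: top.not_eq_extremum)
      thus ?thesis using B[of V x "\<phi> x", OF lt] H lt by auto
    qed
    thus ?thesis by blast
  qed
  show ?thesis using partA partB by blast
qed

end
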